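(* Let $S$ be a finite monoid. Then every almost pure $S$-act is absolutely pure.
   Context: Let $S$ be a monoid. A (right) $S$-act is a set $A$ with a map $A\times S\to A$, $(a,s)\mapsto as$, such that $a1=a$ and $a(st)=(as)t$. Given an $S$-act $A$ and a set $X$ of variables, an equation over $A$ is an expression of one of the forms $xs=yt$, $xs=xt$ or $xs=a$ with $x,y\in X$, $s,t\in S$, $a\in A$. If $A$ is a subact of $B$, a solution in $B$ of a set $\Sigma$ of such equations is a family $(b_x)_{x\in X}$ in $B$ with $b_xs=b_yt$ for each $xs=yt\in\Sigma$ and $b_xs=a$ for each $xs=a\in\Sigma$. $\Sigma$ is consistent if it has a solution in some $S$-act containing $A$ as a subact. $A$ is almost pure if every finite consistent set of equations over $A$ in one variable has a solution in $A$, and absolutely pure if every finite consistent set of equations over $A$ (in finitely many variables) has a solution in $A$. *)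

theory Defs
  imports Main
begin

definition is_act :: "'a set \<Rightarrow> ('a \<Rightarrow> 's::monoid_mult \<Rightarrow> 'a) \<Rightarrow> bool" where
  "is_act A act \<longleftrightarrow>
     (\<forall>a\<in>A. \<forall>s. act a s \<in> A) \<and>
     (\<forall>a\<in>A. act a 1 = a) \<and>
     (\<forall>a\<in>A. \<forall>s t. act a (s * t) = act (act a s) t)"

text \<open>Equations: EqVV x s y t is  x s = y t  (the form x s = x t is the case x = y);
  EqVC x s a is  x s = a.\<close>
datatype ('x, 's, 'a) eqn = EqVV 'x 's 'x 's | EqVC 'x 's 'a

fun eqn_vars :: "('x, 's, 'a) eqn \<Rightarrow> 'x set" where
  "eqn_vars (EqVV x s y t) = {x, y}"
| "eqn_vars (EqVC x s a) = {x}"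

fun eqn_consts :: "('x, 's, 'a) eqn \<Rightarrow> 'a set" where
  "eqn_consts (EqVV x s y t) = {}"
| "eqn_consts (EqVC x s a) = {a}"

definition eqns_over :: "'a set \<Rightarrow> 'x set \<Rightarrow> ('x, 's, 'a) eqn set \<Rightarrow> bool" where
  "eqns_over A X \<Sigma> \<longleftrightarrow> (\<forall>e\<in>\<Sigma>. eqn_vars e \<subseteq> X \<and> eqn_consts e \<subseteq> A)"

fun sat_eqn :: "('b \<Rightarrow> 's \<Rightarrow> 'b) \<Rightarrow> ('a \<Rightarrow> 'b) \<Rightarrow> ('x \<Rightarrow> 'b) \<Rightarrow> ('x, 's, 'a) eqn \<Rightarrow> bool" where
  "sat_eqn actB emb sol (EqVV x s y t) \<longleftrightarrow> actB (sol x) s = actB (sol y) t"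
| "sat_eqn actB emb sol (EqVC x s a) \<longleftrightarrow> actB (sol x) s = emb a"

definition solvable_in :: "'a set \<Rightarrow> ('a \<Rightarrow> 's \<Rightarrow> 'a) \<Rightarrow> 'x set \<Rightarrow> ('x, 's, 'a) eqn set \<Rightarrow> bool" where
  "solvable_in A act X \<Sigma> \<longleftrightarrow>
     (\<exists>sol. (\<forall>x\<in>X. sol x \<in> A) \<and> (\<forall>e\<in>\<Sigma>. sat_eqn act id sol e))"

text \<open>Consistency, relative to S-acts B whose elements live in the type 'b:
  there is an S-act B containing (an isomorphic copy emb ` A of) A as a subact
  in which Sigma has a solution.\<close>
definition consistent_in ::
  "'b itself \<Rightarrow> 'a set \<Rightarrow> ('a \<Rightarrow> 's::monoid_mult \<Rightarrow> 'a) \<Rightarrow> 'x set \<Rightarrow> ('x, 's, 'a) eqn set \<Rightarrow> bool" where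
  "consistent_in (_ :: 'b itself) A act X \<Sigma> \<longleftrightarrow>
     (\<exists>(B :: 'b set) actB emb sol.
        is_act B actB \<and> inj_on emb A \<and> emb ` A \<subseteq> B \<and>
        (\<forall>a\<in>A. \<forall>s. emb (act a s) = actB (emb a) s) \<and>
        (\<forall>x\<in>X. sol x \<in> B) \<and> (\<forall>e\<in>\<Sigma>. sat_eqn actB emb sol e))"

text \<open>Consistency is tested in S-acts with elements of type
  ('a + unit \<times> 's) set, which is large enough to hold the universal act
  (A together with the one-generator act on X \<times> S, modulo the congruence
  generated by Sigma); hence this is equivalent to consistency in an arbitrary act.\<close>
definition almost_pure :: "'a set \<Rightarrow> ('a \<Rightarrow> 's::monoid_mult \<Rightarrow> 'a) \<Rightarrow> bool" where
  "almost_pure A act \<longleftrightarrow>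
     (\<forall>\<Sigma> :: (unit, 's, 'a) eqn set.
        finite \<Sigma> \<and> eqns_over A UNIV \<Sigma> \<and>
        consistent_in TYPE(('a + unit \<times> 's) set) A act UNIV \<Sigma>
        \<longrightarrow> solvable_in A act UNIV \<Sigma>)"

definition absolutely_pure_wrt ::
  "'x itself \<Rightarrow> 'b itself \<Rightarrow> 'a set \<Rightarrow> ('a \<Rightarrow> 's::monoid_mult \<Rightarrow> 'a) \<Rightarrow> bool" where
  "absolutely_pure_wrt (_ :: 'x itself) (_ :: 'b itself) A act \<longleftrightarrow>
     (\<forall>(X :: 'x set) (\<Sigma> :: ('x, 's, 'a) eqn set).
        finite X \<and> finite \<Sigma> \<and> eqns_over A X \<Sigma> \<and>
        consistent_in TYPE('b) A act X \<Sigma>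
        \<longrightarrow> solvable_in A act X \<Sigma>)"

end

theory Submission
  imports Defs
begin

lemma transport:
  assumes "is_act D actD" "inj_on f D"
  shows "is_act (f ` D) (\<lambda>p s. f (actD (inv_into D f p) s))"
  using assms unfolding is_act_def by (auto simp: inv_into_f_f)

lemma one_var:
  fixes actB :: "'b \<Rightarrow> 's::{monoid_mult,finite} \<Rightarrow> 'b"
    and act :: "'a \<Rightarrow> 's \<Rightarrow> 'a"
  assumes act: "is_act A act" and ap: "almost_pure A act" and isB: "is_act B actB"
    and inj: "inj_on emb A" and sub: "emb ` A \<subseteq> B"
    and hom: "\<forall>a\<in>A. \<forall>s. emb (act a s) = actB (emb a) s" and b: "b \<in> B"
  obtains c where "c \<in> A" "\<And>s t. actB b s = actB b t \<Longrightarrow> act c s = act c t"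
    "\<And>s a. a \<in> A \<Longrightarrow> actB b s = emb a \<Longrightarrow> act c s = a"
proof -
  define \<Sigma> :: "(unit,'s,'a) eqn set" where "\<Sigma> = {EqVV () s () t | s t. actB b s = actB b t} \<union>
     {EqVC () s a | s a. a \<in> A \<and> actB b s = emb a}"
  have f1: "finite {EqVV () s () t | s t. actB b s = actB b t}"
  proof (rule finite_subset)
    show "{EqVV () s () t | s t. actB b s = actB b t} \<subseteq> (\<lambda>(s,t). EqVV () s () t) ` UNIV" by auto
  qed simp
  have f2: "finite {EqVC () s a | s a. a \<in> A \<and> actB b s = emb a}"
  proof (rule finite_subset)
    show "{EqVC () s a | s a. a \<in> A \<and> actB b s = emb a} \<subseteq> (\<lambda>s. EqVC () s (inv_into A emb (actB b s))) ` UNIV"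
      using inj by (auto simp: inv_into_f_f)
  qed simp
  have fin: "finite \<Sigma>" unfolding \<Sigma>_def using f1 f2 by simp
  have over: "eqns_over A UNIV \<Sigma>" unfolding \<Sigma>_def eqns_over_def by auto
  define D where "D = emb ` A \<union> range (actB b)"
  define code :: "'b \<Rightarrow> ('a + unit \<times> 's) set" where
    "code d = Inl ` {a\<in>A. emb a = d} \<union> Inr ` {((),s) | s. actB b s = d}" for d
  have DB: "D \<subseteq> B" using sub b isB unfolding D_def is_act_def by auto
  have isD: "is_act D actB"
    unfolding is_act_def
  proof (intro conjI ballI allI)
    fix d s assume d: "d \<in> D"
    show "actB d s \<in> D"
    proof (cases "d \<in> emb ` A")
      case True
      then obtain a where a: "a \<in> A" "d = emb a" by auto
      then have "actB d s = emb (act a s)" using hom by simp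
      moreover have "act a s \<in> A" using act a unfolding is_act_def by blast
      ultimately show ?thesis unfolding D_def by blast
    next
      case False
      then obtain t where "d = actB b t" using d unfolding D_def by auto
      then have "actB d s = actB b (t * s)" using isB b unfolding is_act_def by simp
      then show ?thesis unfolding D_def by blast
    qed
  next
    fix d assume "d \<in> D" then show "actB d 1 = d" using DB isB unfolding is_act_def by blast
  next
    fix d s t assume "d \<in> D" then show "actB d (s * t) = actB (actB d s) t"
      using DB isB unfolding is_act_def by blast
  qed
  have injc: "inj_on code D"
  proof (rule inj_onI)
    fix d d' assume "d \<in> D" "d' \<in> D" "code d = code d'"
    note eq = \<open>code d = code d'\<close>
    show "d = d'"
    proof (cases "d \<in> emb ` A")
      case True
      then obtain a where a: "a \<in> A" "emb a = d" by auto
      then have "Inl a \<in> code d" unfolding code_def by auto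
      then have "Inl a \<in> code d'" using eq by simp
      then have "emb a = d'" unfolding code_def by auto
      then show ?thesis using a by simp
    next
      case False
      then obtain s where s: "actB b s = d" using \<open>d \<in> D\<close> unfolding D_def by auto
      then have "Inr ((),s) \<in> code d" unfolding code_def by auto
      then have "Inr ((),s) \<in> code d'" using eq by simp
      then have "actB b s = d'" unfolding code_def by auto
      then show ?thesis using s by simp
    qed
  qed
  have cons: "consistent_in TYPE(('a + unit \<times> 's) set) A act UNIV \<Sigma>"
    unfolding consistent_in_def
  proof (intro exI conjI)
    show "is_act (code ` D) (\<lambda>p s. code (actB (inv_into D code p) s))"
      using transport[OF isD injc] .
    show "inj_on (code \<circ> emb) A"
      using inj injc by (auto intro: comp_inj_on inj_on_subset simp: D_def)
    show "(code \<circ> emb) ` A \<subseteq> code ` D" by (auto simp: D_def)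
    show "\<forall>a\<in>A. \<forall>s. (code \<circ> emb) (act a s) = code (actB (inv_into D code ((code \<circ> emb) a)) s)"
      using hom injc by (auto simp: D_def inv_into_f_f)
    have "actB b 1 = b" using isB b unfolding is_act_def by blast
    then have bD: "b \<in> D" unfolding D_def by (metis UnI2 rangeI)
    then show "\<forall>x\<in>UNIV. (\<lambda>_. code b) x \<in> code ` D" by blast
    have aD: "actB b s \<in> D" for s unfolding D_def by auto
    show "\<forall>e\<in>\<Sigma>. sat_eqn (\<lambda>p s. code (actB (inv_into D code p) s)) (code \<circ> emb) (\<lambda>_. code b) e"
      unfolding \<Sigma>_def using injc bD by (auto simp: inv_into_f_f)
  qed
  then have "solvable_in A act UNIV \<Sigma>" using ap fin over unfolding almost_pure_def by blast
  then obtain sol where sol: "sol () \<in> A" "\<forall>e\<in>\<Sigma>. sat_eqn act id sol e"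
    unfolding solvable_in_def by blast
  show ?thesis
  proof (rule that[of "sol ()"])
    show "sol () \<in> A" by fact
    show "act (sol ()) s = act (sol ()) t" if "actB b s = actB b t" for s t
    proof -
      have "EqVV () s () t \<in> \<Sigma>" unfolding \<Sigma>_def using that by blast
      then show ?thesis using sol(2) by fastforce
    qed
    show "act (sol ()) s = a" if "a \<in> A" "actB b s = emb a" for s a
    proof -
      have "EqVC () s a \<in> \<Sigma>" unfolding \<Sigma>_def using that by blast
      then show ?thesis using sol(2) by fastforce
    qed
  qed
qed

lemma main_ind:
  fixes actB :: "'b \<Rightarrow> 's::{monoid_mult,finite} \<Rightarrow> 'b"
    and act :: "'a \<Rightarrow> 's \<Rightarrow> 'a" and sol :: "'x \<Rightarrow> 'b"
    and \<Sigma> :: "('x,'s,'a) eqn set"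
  assumes act: "is_act A act" and ap: "almost_pure A act" and finX: "finite X"
    and over: "eqns_over A X \<Sigma>" and inj: "inj_on emb A"
    and isB: "is_act B actB" and sub: "emb ` A \<subseteq> B"
    and hom: "\<forall>a\<in>A. \<forall>s. emb (act a s) = actB (emb a) s"
    and solB: "\<forall>x\<in>X. sol x \<in> B" and sat: "\<forall>e\<in>\<Sigma>. sat_eqn actB emb sol e"
  shows "solvable_in A act X \<Sigma>"
  using isB sub hom solB sat
proof (induction "card {x\<in>X. sol x \<notin> emb ` A}" arbitrary: B actB sol rule: less_induct)
  case less
  note isB = less.prems(1) and sub = less.prems(2) and hom = less.prems(3)
    and solB = less.prems(4) and sat = less.prems(5)
  show ?case
  proof (cases "{x\<in>X. sol x \<notin> emb ` A} = {}")
    case True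
    then have inA: "x \<in> X \<Longrightarrow> sol x \<in> emb ` A" for x by blast
    have ee: "emb (inv_into A emb (sol x)) = sol x" if "x \<in> X" for x
      using inA[OF that] by (auto simp: f_inv_into_f)
    have ia: "inv_into A emb (sol x) \<in> A" if "x \<in> X" for x
      using inA[OF that] by (auto intro: inv_into_into)
    have hact: "act a s \<in> A" if "a \<in> A" for a s using act that unfolding is_act_def by blast
    show ?thesis unfolding solvable_in_def
    proof (intro exI conjI ballI)
      fix x assume "x \<in> X" then show "inv_into A emb (sol x) \<in> A" by (rule ia)
    next
      fix e assume e: "e \<in> \<Sigma>"
      show "sat_eqn act id (\<lambda>x. inv_into A emb (sol x)) e"
      proof (cases e)
        case (EqVV y s z t)
        then have yz: "y \<in> X" "z \<in> X" using over e unfolding eqns_over_def by auto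
        have "emb (act (inv_into A emb (sol y)) s) = actB (sol y) s"
          using hom ia[OF yz(1)] ee[OF yz(1)] by metis
        also have "\<dots> = actB (sol z) t" using sat e EqVV by auto
        also have "\<dots> = emb (act (inv_into A emb (sol z)) t)"
          using hom ia[OF yz(2)] ee[OF yz(2)] by metis
        finally show ?thesis using EqVV inj hact ia yz by (auto dest: inj_onD)
      next
        case (EqVC y s a)
        then have yz: "y \<in> X" "a \<in> A" using over e unfolding eqns_over_def by auto
        have "emb (act (inv_into A emb (sol y)) s) = actB (sol y) s"
          using hom ia[OF yz(1)] ee[OF yz(1)] by metis
        also have "\<dots> = emb a" using sat e EqVC by auto
        finally show ?thesis using EqVC inj hact ia yz by (auto dest: inj_onD)
      qed
    qed
  next
    case False
    then obtain x0 where x0: "x0 \<in> X" "sol x0 \<notin> emb ` A" by blast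
    define b where "b = sol x0"
    have b: "b \<in> B" using solB x0 b_def by auto
    obtain c where c: "c \<in> A" "\<And>s t. actB b s = actB b t \<Longrightarrow> act c s = act c t"
      "\<And>s a. a \<in> A \<Longrightarrow> actB b s = emb a \<Longrightarrow> act c s = a"
      using one_var[OF act ap isB inj sub hom b] by blast
    define \<psi> where "\<psi> d = (if d \<in> emb ` A then d else if (\<exists>s. actB b s = d)
       then emb (act c (SOME s. actB b s = d)) else d)" for d
    have hact: "act a s \<in> A" if "a \<in> A" for a s using act that unfolding is_act_def by blast
    have actc: "act c (s * t) = act (act c s) t" for s t using act c(1) unfolding is_act_def by blast
    have P1: "\<psi> d \<in> B" if "d \<in> B" for d using that sub hact c(1) unfolding \<psi>_def by auto
    have P2: "\<psi> d = d" if "d \<in> emb ` A" for d using that unfolding \<psi>_def by auto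
    have bb: "actB b 1 = b" using isB b unfolding is_act_def by blast
    have P3: "\<psi> b \<in> emb ` A" unfolding \<psi>_def using bb c(1) hact by auto
    have P4: "\<psi> (actB d s) = \<psi> (actB (\<psi> d) s)" if d: "d \<in> B" for d s
    proof (cases "d \<in> emb ` A")
      case True then show ?thesis by (simp add: P2)
    next
      case nA: False
      show ?thesis
      proof (cases "\<exists>s. actB b s = d")
        case True
        define s1 where "s1 = (SOME s. actB b s = d)"
        have s1: "actB b s1 = d" using True unfolding s1_def by (rule someI_ex)
        have pd: "\<psi> d = emb (act c s1)" using nA True unfolding \<psi>_def s1_def by simp
        have ads: "actB d s = actB b (s1 * s)" using isB b s1 unfolding is_act_def by auto
        have rhs: "\<psi> (actB (\<psi> d) s) = emb (act c (s1 * s))"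
        proof -
          have "actB (\<psi> d) s = emb (act (act c s1) s)" using pd hom c(1) hact by simp
          moreover have "act (act c s1) s \<in> A" using hact c(1) by blast
          ultimately show ?thesis using P2 actc by (metis image_eqI)
        qed
        show ?thesis
        proof (cases "actB d s \<in> emb ` A")
          case True
          then obtain a where a: "a \<in> A" "actB d s = emb a" by auto
          then have "act c (s1 * s) = a" using c(3) ads by simp
          then show ?thesis using rhs a P2 by simp
        next
          case nA2: False
          define s2 where "s2 = (SOME s'. actB b s' = actB d s)"
          have ex: "\<exists>s'. actB b s' = actB d s" using ads by metis
          have s2: "actB b s2 = actB d s" unfolding s2_def using ex by (rule someI_ex)
          have "\<psi> (actB d s) = emb (act c s2)" using nA2 ex unfolding \<psi>_def s2_def by simp
          also have "act c s2 = act c (s1 * s)" using s2 ads by (intro c(2)) simp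
          finally show ?thesis using rhs by simp
        qed
      next
        case False
        then show ?thesis using nA unfolding \<psi>_def by simp
      qed
    qed
    have P5: "\<psi> (\<psi> d) = \<psi> d" for d
    proof -
      have "\<psi> d \<in> emb ` A \<or> \<psi> d = d" unfolding \<psi>_def using hact[OF c(1)] by auto
      then show ?thesis using P2 by auto
    qed
    define B' where "B' = \<psi> ` B"
    define actB' where "actB' p s = \<psi> (actB p s)" for p s
    define sol' where "sol' x = \<psi> (sol x)" for x
    have B'B: "B' \<subseteq> B" using P1 unfolding B'_def by auto
    have isB': "is_act B' actB'" unfolding is_act_def
    proof (intro conjI ballI allI)
      fix p s assume "p \<in> B'"
      then have "actB p s \<in> B" using B'B isB unfolding is_act_def by blast
      then show "actB' p s \<in> B'" unfolding actB'_def B'_def by blast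
    next
      fix p assume "p \<in> B'"
      then obtain d where "d \<in> B" "p = \<psi> d" unfolding B'_def by blast
      then show "actB' p 1 = p" using B'B isB P5 P1 unfolding actB'_def is_act_def by metis
    next
      fix p s t assume p: "p \<in> B'"
      then have pB: "p \<in> B" using B'B by blast
      have "actB' p (s * t) = \<psi> (actB (actB p s) t)" using isB pB unfolding actB'_def is_act_def by simp
      also have "\<dots> = \<psi> (actB (\<psi> (actB p s)) t)"
        using P4 isB pB unfolding is_act_def by blast
      finally show "actB' p (s * t) = actB' (actB' p s) t" unfolding actB'_def .
    qed
    have sub': "emb ` A \<subseteq> B'"
    proof
      fix y assume y: "y \<in> emb ` A"
      then have "y = \<psi> y" by (simp add: P2)
      moreover have "y \<in> B" using y sub by blast
      ultimately show "y \<in> B'" unfolding B'_def by blast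
    qed
    have hom': "\<forall>a\<in>A. \<forall>s. emb (act a s) = actB' (emb a) s"
      using hom hact P2 unfolding actB'_def by (metis image_eqI)
    have solB': "\<forall>x\<in>X. sol' x \<in> B'" using solB unfolding sol'_def B'_def by auto
    have sat': "\<forall>e\<in>\<Sigma>. sat_eqn actB' emb sol' e"
    proof
      fix e assume e: "e \<in> \<Sigma>"
      have key: "actB' (sol' y) s = \<psi> (actB (sol y) s)" if "y \<in> X" for y s
        using P4 solB that unfolding actB'_def sol'_def by metis
      show "sat_eqn actB' emb sol' e"
      proof (cases e)
        case (EqVV y s z t)
        then have "y \<in> X" "z \<in> X" using over e unfolding eqns_over_def by auto
        then show ?thesis using key sat e EqVV by auto
      next
        case (EqVC y s a)
        then have "y \<in> X" "a \<in> A" using over e unfolding eqns_over_def by auto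
        then show ?thesis using key sat e EqVC P2 by auto
      qed
    qed
    have subset: "{x\<in>X. sol' x \<notin> emb ` A} \<subseteq> {x\<in>X. sol x \<notin> emb ` A} - {x0}"
      using P2 P3 unfolding sol'_def b_def by auto
    have lt: "card {x\<in>X. sol' x \<notin> emb ` A} < card {x\<in>X. sol x \<notin> emb ` A}"
    proof -
      have "card {x\<in>X. sol' x \<notin> emb ` A} \<le> card ({x\<in>X. sol x \<notin> emb ` A} - {x0})"
        using subset finX by (intro card_mono) auto
      also have "\<dots> < card {x\<in>X. sol x \<notin> emb ` A}"
        using x0 finX by (intro card_Diff1_less) auto
      finally show ?thesis .
    qed
    show ?thesis using less.hyps[OF lt isB' sub' hom' solB' sat'] .
  qed
qed

theorem mainTheorem2:
  fixes A :: "'a set" and act :: "'a \<Rightarrow> 's::{monoid_mult, finite} \<Rightarrow> 'a"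
  assumes "is_act A act"
    and "almost_pure A act"
  shows "absolutely_pure_wrt TYPE('x) TYPE('b) A act"
  unfolding absolutely_pure_wrt_def
proof (intro allI impI)
  fix X :: "'x set" and \<Sigma> :: "('x,'s,'a) eqn set"
  assume h: "finite X \<and> finite \<Sigma> \<and> eqns_over A X \<Sigma> \<and> consistent_in TYPE('b) A act X \<Sigma>"
  then obtain B :: "'b set" and actB emb sol where o:
    "is_act B actB" "inj_on emb A" "emb ` A \<subseteq> B"
    "\<forall>a\<in>A. \<forall>s. emb (act a s) = actB (emb a) s"
    "\<forall>x\<in>X. sol x \<in> B" "\<forall>e\<in>\<Sigma>. sat_eqn actB emb sol e"
    unfolding consistent_in_def by blast
  show "solvable_in A act X \<Sigma>"
    by (rule main_ind[OF assms, of X \<Sigma> emb B actB sol]) (use h o in auto)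
qed

end
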